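(* The Ewens distribution $p^\star$, $p^\star_N(\pi)=\frac{\prod_{B\in\pi}(b-1)!}{n!}$, is the unique random partition $p$ that generates the potential for TU games and satisfies conditional independence.
   Context: $\mathbf{U}$ is a finite set of players; cardinalities of $N,S,B$ are $n,s,b$. $\Pi(N)$ is the set of partitions of $N$ ($\Pi(\emptyset)=\{\emptyset\}$). A random partition is $p=(p_N)_{N\subseteq\mathbf{U}}$ with $p_N$ a probability distribution on $\Pi(N)$. A TU game on $N$ is $v:2^N\to\mathbb{R}$ with $v(\emptyset)=0$. The potential for TU games is $\mathrm{Pot}(v)=\sum_{\emptyset\ne S\subseteq N}\frac{(s-1)!(n-s)!}{n!}v(S)$ (the unique map vanishing on the empty game with $\sum_{i\in N}[\mathrm{Pot}(v)-\mathrm{Pot}(v|_{2^{N\setminus\{i\}}})]=v(N)$). $p$ generates the potential for TU games if $\sum_{\pi\in\Pi(N)}p_N(\pi)\sum_{B\in\pi}v(B)=\mathrm{Pot}(v)$ for all $N\subseteq\mathbf{U}$ and TU games $v$ on $N$. $p$ satisfies conditional independence if $p_N(\pi)=p_{N\setminus B}(\pi\setminus\{B\})\sum_{\tau\in\Pi(N):B\in\tau}p_N(\tau)$ for all $N\subseteq\mathbf{U}$, $\pi\in\Pi(N)$, $B\in\pi$. *)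

theory Defs
  imports Complex_Main "HOL-Library.Disjoint_Sets"
begin

text \<open>The universe U of players is the (finite) type 'a. A coalition N is any set of
type 'a set; Pi(N) is the set of partitions of N, given by partition_on N
(which yields Pi({}) = {{}}).\<close>

definition partitions :: "'a set \<Rightarrow> 'a set set set" where
  "partitions N = {\<pi>. partition_on N \<pi>}"

definition random_partition :: "('a set \<Rightarrow> 'a set set \<Rightarrow> real) \<Rightarrow> bool" where
  "random_partition p \<longleftrightarrow>
     (\<forall>N \<pi>. \<pi> \<in> partitions N \<longrightarrow> p N \<pi> \<ge> 0) \<and>
     (\<forall>N \<pi>. \<pi> \<notin> partitions N \<longrightarrow> p N \<pi> = 0) \<and>
     (\<forall>N. (\<Sum>\<pi>\<in>partitions N. p N \<pi>) = 1)"

text \<open>A TU game on N: v with v {} = 0; only its values on subsets of N matter.\<close>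

definition Pot :: "'a set \<Rightarrow> ('a set \<Rightarrow> real) \<Rightarrow> real" where
  "Pot N v = (\<Sum>S\<in>Pow N - {{}}.
      (fact (card S - 1) * fact (card N - card S) / fact (card N)) * v S)"

definition generates_potential :: "('a set \<Rightarrow> 'a set set \<Rightarrow> real) \<Rightarrow> bool" where
  "generates_potential p \<longleftrightarrow>
     (\<forall>N (v :: 'a set \<Rightarrow> real). v {} = 0 \<longrightarrow>
        (\<Sum>\<pi>\<in>partitions N. p N \<pi> * (\<Sum>B\<in>\<pi>. v B)) = Pot N v)"

definition conditional_independence :: "('a set \<Rightarrow> 'a set set \<Rightarrow> real) \<Rightarrow> bool" where
  "conditional_independence p \<longleftrightarrow>
     (\<forall>N \<pi> B. \<pi> \<in> partitions N \<longrightarrow> B \<in> \<pi> \<longrightarrow>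
        p N \<pi> = p (N - B) (\<pi> - {B}) * (\<Sum>\<tau>\<in>{\<tau>\<in>partitions N. B \<in> \<tau>}. p N \<tau>))"

definition ewens :: "'a set \<Rightarrow> 'a set set \<Rightarrow> real" where
  "ewens N \<pi> = (if \<pi> \<in> partitions N
      then (\<Prod>B\<in>\<pi>. fact (card B - 1)) / fact (card N) else 0)"

end

theory Submission
  imports Defs
begin

lemma part_fin: "finite N \<Longrightarrow> finite (partitions N)"
  using finitely_many_partition_on unfolding partitions_def by auto

lemma ins_part:
  assumes "\<sigma> \<in> partitions (N - B)" "B \<subseteq> N" "B \<noteq> {}"
  shows "insert B \<sigma> \<in> partitions N \<and> B \<notin> \<sigma>"
proof -
  have u: "\<Union>\<sigma> = N - B" using assms(1) partition_onD1 unfolding partitions_def by auto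
  hence "disjnt B (\<Union>\<sigma>)" by (auto simp: disjnt_def)
  hence "partition_on N (insert B \<sigma>)"
    using partition_on_insert[of B \<sigma> N] assms unfolding partitions_def by auto
  moreover have "B \<notin> \<sigma>" using u assms(3) by blast
  ultimately show ?thesis unfolding partitions_def by auto
qed

lemma rem_part:
  assumes "\<tau> \<in> partitions N" "B \<in> \<tau>"
  shows "\<tau> - {B} \<in> partitions (N - B)"
proof -
  have d: "disjoint \<tau>" using assms(1) partition_onD2 unfolding partitions_def by auto
  have "disjnt B (\<Union>(\<tau> - {B}))"
    using d assms(2) unfolding disjnt_def pairwise_def by blast
  moreover have "insert B (\<tau> - {B}) = \<tau>" using assms(2) by auto
  ultimately show ?thesis
    using partition_on_insert[of B "\<tau> - {B}" N] assms unfolding partitions_def by auto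
qed

lemma sum_with_block:
  assumes "B \<subseteq> N" "B \<noteq> {}"
  shows "(\<Sum>\<tau>\<in>{\<tau>\<in>partitions N. B \<in> \<tau>}. f \<tau>) = (\<Sum>\<sigma>\<in>partitions (N - B). f (insert B \<sigma>))"
proof (rule sum.reindex_bij_witness[where j = "\<lambda>\<tau>. \<tau> - {B}" and i = "insert B"])
  fix a assume "a \<in> {\<tau> \<in> partitions N. B \<in> \<tau>}"
  thus "insert B (a - {B}) = a" "a - {B} \<in> partitions (N - B)" "f (insert B (a - {B})) = f a"
    using rem_part by (auto simp: insert_absorb)
next
  fix b assume "b \<in> partitions (N - B)"
  thus "insert B b - {B} = b" "insert B b \<in> {\<tau> \<in> partitions N. B \<in> \<tau>}"
    using ins_part[OF _ assms] by auto
qed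

lemma fact_sum:
  "finite M \<Longrightarrow> (\<Sum>C\<in>Pow M. fact (card C) * fact (card M - card C)) = (fact (card M + 1) :: real)"
proof (induction M rule: finite_induct)
  case empty
  then show ?case by simp
next
  case (insert y M)
  let ?m = "card M"
  have inj: "inj_on (insert y) (Pow M)" using insert(2) unfolding inj_on_def
    by (metis PowD insert_ident subsetD)
  have disj: "Pow M \<inter> insert y ` Pow M = {}" using insert(2) by auto
  have "(\<Sum>C\<in>Pow (insert y M). fact (card C) * fact (card (insert y M) - card C))
     = (\<Sum>C\<in>Pow M. fact (card C) * fact (?m + 1 - card C))
       + (\<Sum>C\<in>insert y ` Pow M. fact (card C) * fact (?m + 1 - card C))"
    unfolding Pow_insert using insert disj by (simp add: sum.union_disjoint)
  also have "(\<Sum>C\<in>insert y ` Pow M. fact (card C) * fact (?m + 1 - card C))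
     = (\<Sum>C\<in>Pow M. fact (card C + 1) * fact (?m - card C) :: real)"
  proof -
    have "(\<Sum>C\<in>insert y ` Pow M. fact (card C) * fact (?m + 1 - card C))
       = (\<Sum>C\<in>Pow M. fact (card (insert y C)) * fact (?m + 1 - card (insert y C)) :: real)"
      by (simp add: sum.reindex[OF inj])
    also have "\<dots> = (\<Sum>C\<in>Pow M. fact (card C + 1) * fact (?m - card C))"
    proof (rule sum.cong)
      fix C assume "C \<in> Pow M"
      hence "card (insert y C) = card C + 1" using insert(1,2) finite_subset
        by (metis PowD Suc_eq_plus1 card_insert_disjoint subset_iff)
      thus "fact (card (insert y C)) * fact (?m + 1 - card (insert y C)) = (fact (card C + 1) * fact (?m - card C) :: real)"
        by simp
    qed simp
    finally show ?thesis .
  qed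
  also have "(\<Sum>C\<in>Pow M. fact (card C) * fact (?m + 1 - card C))
       + (\<Sum>C\<in>Pow M. fact (card C + 1) * fact (?m - card C))
       = (\<Sum>C\<in>Pow M. (real ?m + 2) * (fact (card C) * fact (?m - card C)))"
    unfolding sum.distrib[symmetric]
  proof (rule sum.cong)
    fix C assume "C \<in> Pow M"
    hence le: "card C \<le> ?m" using insert(1) by (simp add: card_mono)
    hence e: "?m + 1 - card C = Suc (?m - card C)" by simp
    have "fact (?m + 1 - card C) = (real (?m - card C) + 1) * (fact (?m - card C) :: real)"
      unfolding e fact_Suc by simp
    moreover have "fact (card C + 1) = (real (card C) + 1) * (fact (card C) :: real)"
      by simp
    moreover have "real (?m - card C) = real ?m - real (card C)" using le by simp
    ultimately have f: "fact (?m + 1 - card C) = (real ?m - real (card C) + 1) * (fact (?m - card C) :: real)"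
       "fact (card C + 1) = (real (card C) + 1) * (fact (card C) :: real)" by simp_all
    show "fact (card C) * fact (?m + 1 - card C) + fact (card C + 1) * fact (?m - card C)
       = (real ?m + 2) * (fact (card C) * fact (?m - card C) :: real)"
      unfolding f by (simp add: algebra_simps)
  qed simp
  also have "\<dots> = (real ?m + 2) * fact (?m + 1)"
    using insert by (simp add: sum_distrib_left[symmetric])
  also have "\<dots> = fact (card (insert y M) + 1)"
    using insert by (simp add: algebra_simps)
  finally show ?case .
qed

lemma partitions_empty: "partitions {} = {{}}"
  unfolding partitions_def using partition_on_empty by auto

lemma part_props:
  assumes "\<pi> \<in> partitions N" "B \<in> \<pi>"
  shows "B \<subseteq> N" "B \<noteq> {}"
  using assms partition_onD1 partition_onD3 unfolding partitions_def by blast+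

lemma S_eq:
  "finite N \<Longrightarrow> (\<Sum>\<pi>\<in>partitions N. \<Prod>B\<in>\<pi>. fact (card B - 1)) = (fact (card N) :: real)"
proof (induction N rule: finite_psubset_induct)
  case (psubset N)
  show ?case
  proof (cases "N = {}")
    case True
    then show ?thesis by (simp add: partitions_empty)
  next
    case False
    then obtain x where x: "x \<in> N" by blast
    define M where "M = N - {x}"
    have fM: "finite M" using psubset(1) M_def by simp
    have xM: "x \<notin> M" using M_def by simp
    have NM: "N = insert x M" using M_def x by auto
    define A where "A C = {\<tau>\<in>partitions N. insert x C \<in> \<tau>}" for C
    have cover: "partitions N = (\<Union>C\<in>Pow M. A C)"
    proof
      show "partitions N \<subseteq> (\<Union>C\<in>Pow M. A C)"
      proof
        fix \<tau> assume t: "\<tau> \<in> partitions N"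
        hence "\<Union>\<tau> = N" using partition_onD1 unfolding partitions_def by auto
        then obtain B where B: "B \<in> \<tau>" "x \<in> B" using x by blast
        have "B \<subseteq> N" using part_props[OF t B(1)] by simp
        hence "B - {x} \<in> Pow M" using M_def by auto
        moreover have "insert x (B - {x}) = B" using B by auto
        hence "\<tau> \<in> A (B - {x})" unfolding A_def using t B by simp
        ultimately show "\<tau> \<in> (\<Union>C\<in>Pow M. A C)" by blast
      qed
    next
      show "(\<Union>C\<in>Pow M. A C) \<subseteq> partitions N" unfolding A_def by blast
    qed
    have disj: "\<forall>C\<in>Pow M. \<forall>D\<in>Pow M. C \<noteq> D \<longrightarrow> A C \<inter> A D = {}"
    proof (intro ballI impI)
      fix C D assume C: "C \<in> Pow M" and D: "D \<in> Pow M" and ne: "C \<noteq> D"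
      show "A C \<inter> A D = {}"
      proof (rule ccontr)
        assume "A C \<inter> A D \<noteq> {}"
        then obtain \<tau> where t: "\<tau> \<in> partitions N" "insert x C \<in> \<tau>" "insert x D \<in> \<tau>"
          unfolding A_def by auto
        have "insert x C \<noteq> insert x D" using ne C D xM
          by (metis PowD insert_ident subsetD)
        moreover have "disjoint \<tau>" using t(1) partition_onD2 unfolding partitions_def by auto
        ultimately have "disjnt (insert x C) (insert x D)" using t pairwiseD by metis
        thus False unfolding disjnt_def by simp
      qed
    qed
    have "(\<Sum>\<pi>\<in>partitions N. \<Prod>B\<in>\<pi>. fact (card B - 1))
        = (\<Sum>C\<in>Pow M. \<Sum>\<pi>\<in>A C. \<Prod>B\<in>\<pi>. fact (card B - 1) :: real)"
      unfolding cover
    proof (rule sum.UNION_disjoint[OF _ _ disj])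
      show "finite (Pow M)" using fM by simp
      show "\<forall>C\<in>Pow M. finite (A C)" unfolding A_def using part_fin[OF psubset(1)] by simp
    qed
    also have "\<dots> = (\<Sum>C\<in>Pow M. fact (card C) * fact (card M - card C))"
    proof (rule sum.cong)
      fix C assume C: "C \<in> Pow M"
      have CM: "C \<subseteq> M" using C by auto
      have fC: "finite C" using CM fM finite_subset by blast
      have xC: "x \<notin> C" using CM xM by blast
      have sub: "insert x C \<subseteq> N" using CM NM by auto
      have ne: "insert x C \<noteq> {}" by simp
      have ND: "N - insert x C = M - C" using NM xM by auto
      have ps: "N - insert x C \<subset> N" using x by auto
      have cardD: "card (M - C) = card M - card C" using fC CM by (simp add: card_Diff_subset)
      have "(\<Sum>\<pi>\<in>A C. \<Prod>B\<in>\<pi>. fact (card B - 1) :: real)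
          = (\<Sum>\<sigma>\<in>partitions (N - insert x C). \<Prod>B\<in>insert (insert x C) \<sigma>. fact (card B - 1))"
        unfolding A_def by (rule sum_with_block[OF sub ne])
      also have "\<dots> = (\<Sum>\<sigma>\<in>partitions (N - insert x C). fact (card C) * (\<Prod>B\<in>\<sigma>. fact (card B - 1)))"
      proof (rule sum.cong)
        fix \<sigma> assume s: "\<sigma> \<in> partitions (N - insert x C)"
        have "insert x C \<notin> \<sigma>" using ins_part[OF s sub ne] by simp
        moreover have "finite \<sigma>" using s psubset(1) finite_elements[of "N - insert x C" \<sigma>]
          unfolding partitions_def by auto
        moreover have "card (insert x C) - 1 = card C" using fC xC by simp
        ultimately show "(\<Prod>B\<in>insert (insert x C) \<sigma>. fact (card B - 1)) = fact (card C) * (\<Prod>B\<in>\<sigma>. fact (card B - 1) :: real)"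
          by simp
      qed simp
      also have "\<dots> = fact (card C) * fact (card (N - insert x C))"
        using psubset(2)[OF ps] by (simp add: sum_distrib_left[symmetric])
      also have "\<dots> = fact (card C) * fact (card M - card C)"
        using ND cardD by simp
      finally show "(\<Sum>\<pi>\<in>A C. \<Prod>B\<in>\<pi>. fact (card B - 1) :: real) = fact (card C) * fact (card M - card C)" .
    qed simp
    also have "\<dots> = fact (card M + 1)" using fact_sum[OF fM] .
    also have "\<dots> = fact (card N)" using NM fM xM by simp
    finally show ?thesis .
  qed
qed

lemma block_ewens:
  assumes "B \<subseteq> N" "B \<noteq> {}"
  shows "(\<Sum>\<tau>\<in>{\<tau>\<in>partitions (N::'a::finite set). B \<in> \<tau>}. ewens N \<tau>)
         = fact (card B - 1) * fact (card N - card B) / fact (card N)"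
proof -
  have "(\<Sum>\<tau>\<in>{\<tau>\<in>partitions N. B \<in> \<tau>}. ewens N \<tau>) = (\<Sum>\<sigma>\<in>partitions (N - B). ewens N (insert B \<sigma>))"
    by (rule sum_with_block[OF assms])
  also have "\<dots> = (\<Sum>\<sigma>\<in>partitions (N - B). fact (card B - 1) / fact (card N) * (\<Prod>C\<in>\<sigma>. fact (card C - 1)))"
  proof (rule sum.cong)
    fix \<sigma> assume s: "\<sigma> \<in> partitions (N - B)"
    have "insert B \<sigma> \<in> partitions N" "B \<notin> \<sigma>" using ins_part[OF s assms] by auto
    thus "ewens N (insert B \<sigma>) = fact (card B - 1) / fact (card N) * (\<Prod>C\<in>\<sigma>. fact (card C - 1))"
      unfolding ewens_def by simp
  qed simp
  also have "\<dots> = fact (card B - 1) / fact (card N) * (\<Sum>\<sigma>\<in>partitions (N - B). (\<Prod>C\<in>\<sigma>. fact (card C - 1)))"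
    by (rule sum_distrib_left[symmetric])
  also have "\<dots> = fact (card B - 1) / fact (card N) * fact (card (N - B))"
    using S_eq[of "N - B"] by simp
  also have "\<dots> = fact (card B - 1) * fact (card N - card B) / fact (card N)"
    using assms by (simp add: card_Diff_subset)
  finally show ?thesis .
qed

lemma block_gp:
  assumes gp: "generates_potential p" and B: "B \<subseteq> N" "B \<noteq> {}"
  shows "(\<Sum>\<tau>\<in>{\<tau>\<in>partitions (N::'a::finite set). B \<in> \<tau>}. p N \<tau>)
         = fact (card B - 1) * fact (card N - card B) / fact (card N)"
proof -
  define v :: "'a set \<Rightarrow> real" where "v S = (if S = B then 1 else 0)" for S
  have v0: "v {} = 0" using B unfolding v_def by simp
  have "(\<Sum>\<pi>\<in>partitions N. p N \<pi> * (\<Sum>C\<in>\<pi>. v C)) = Pot N v"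
    using gp v0 unfolding generates_potential_def by blast
  moreover have "(\<Sum>\<pi>\<in>partitions N. p N \<pi> * (\<Sum>C\<in>\<pi>. v C))
      = (\<Sum>\<tau>\<in>{\<tau>\<in>partitions N. B \<in> \<tau>}. p N \<tau>)"
  proof -
    have "(\<Sum>\<pi>\<in>partitions N. p N \<pi> * (\<Sum>C\<in>\<pi>. v C))
        = (\<Sum>\<pi>\<in>partitions N. if B \<in> \<pi> then p N \<pi> else 0)"
      unfolding v_def by (intro sum.cong) auto
    also have "\<dots> = (\<Sum>\<tau>\<in>{\<tau>\<in>partitions N. B \<in> \<tau>}. p N \<tau>)"
      by (rule sum.inter_filter[symmetric]) simp
    finally show ?thesis .
  qed
  moreover have "Pot N v = fact (card B - 1) * fact (card N - card B) / fact (card N)"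
  proof -
    have "Pot N v = (\<Sum>S\<in>Pow N - {{}}. if S = B then fact (card S - 1) * fact (card N - card S) / fact (card N) else 0)"
      unfolding Pot_def v_def by (intro sum.cong) auto
    also have "\<dots> = fact (card B - 1) * fact (card N - card B) / fact (card N)"
      using B by simp
    finally show ?thesis .
  qed
  ultimately show ?thesis by simp
qed

lemma ewens_rp: "random_partition (ewens :: ('a::finite) set \<Rightarrow> _)"
  unfolding random_partition_def
proof (intro conjI allI impI)
  fix N :: "'a set" and \<pi>
  show "\<pi> \<in> partitions N \<Longrightarrow> 0 \<le> ewens N \<pi>"
    unfolding ewens_def by (simp add: prod_nonneg)
  show "\<pi> \<notin> partitions N \<Longrightarrow> ewens N \<pi> = 0" unfolding ewens_def by simp
next
  fix N :: "'a set"
  have "(\<Sum>\<pi>\<in>partitions N. ewens N \<pi>) = (\<Sum>\<pi>\<in>partitions N. (\<Prod>B\<in>\<pi>. fact (card B - 1)) / fact (card N))"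
    unfolding ewens_def by (intro sum.cong) auto
  also have "\<dots> = (\<Sum>\<pi>\<in>partitions N. (\<Prod>B\<in>\<pi>. fact (card B - 1))) / fact (card N)"
    by (simp add: sum_divide_distrib)
  also have "\<dots> = 1" using S_eq[of N] by simp
  finally show "(\<Sum>\<pi>\<in>partitions N. ewens N \<pi>) = 1" .
qed

lemma ewens_gp: "generates_potential (ewens :: ('a::finite) set \<Rightarrow> _)"
  unfolding generates_potential_def
proof (intro allI impI)
  fix N :: "'a set" and v :: "'a set \<Rightarrow> real"
  let ?P = "Pow N - {{}}"
  let ?c = "\<lambda>S. fact (card S - 1) * fact (card N - card S) / fact (card N) :: real"
  have "(\<Sum>\<pi>\<in>partitions N. ewens N \<pi> * (\<Sum>B\<in>\<pi>. v B))
      = (\<Sum>\<pi>\<in>partitions N. \<Sum>B\<in>?P. ewens N \<pi> * (if B \<in> \<pi> then v B else 0))"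
  proof (rule sum.cong)
    fix \<pi> assume p: "\<pi> \<in> partitions N"
    have eq: "\<pi> = {B\<in>?P. B \<in> \<pi>}" using part_props[OF p] by auto
    have "(\<Sum>B\<in>\<pi>. v B) = (\<Sum>B\<in>{B\<in>?P. B \<in> \<pi>}. v B)"
      using eq by (rule arg_cong)
    also have "\<dots> = (\<Sum>B\<in>?P. if B \<in> \<pi> then v B else 0)"
      by (rule sum.inter_filter) simp
    finally show "ewens N \<pi> * (\<Sum>B\<in>\<pi>. v B) = (\<Sum>B\<in>?P. ewens N \<pi> * (if B \<in> \<pi> then v B else 0))"
      by (simp only: sum_distrib_left)
  qed (rule refl)
  also have "\<dots> = (\<Sum>B\<in>?P. \<Sum>\<pi>\<in>partitions N. ewens N \<pi> * (if B \<in> \<pi> then v B else 0))"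
    by (rule sum.swap)
  also have "\<dots> = (\<Sum>B\<in>?P. ?c B * v B)"
  proof (rule sum.cong)
    fix B assume B: "B \<in> ?P"
    have "(\<Sum>\<pi>\<in>partitions N. ewens N \<pi> * (if B \<in> \<pi> then v B else 0))
        = (\<Sum>\<pi>\<in>partitions N. (if B \<in> \<pi> then ewens N \<pi> else 0) * v B)"
      by (rule sum.cong) auto
    also have "\<dots> = (\<Sum>\<pi>\<in>partitions N. (if B \<in> \<pi> then ewens N \<pi> else 0)) * v B"
      by (rule sum_distrib_right[symmetric])
    also have "(\<Sum>\<pi>\<in>partitions N. (if B \<in> \<pi> then ewens N \<pi> else 0))
        = (\<Sum>\<pi>\<in>{\<tau>\<in>partitions N. B \<in> \<tau>}. ewens N \<pi>)"
      by (rule sum.inter_filter[symmetric]) simp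
    also have "\<dots> = ?c B"
      using B by (intro block_ewens) auto
    finally show "(\<Sum>\<pi>\<in>partitions N. ewens N \<pi> * (if B \<in> \<pi> then v B else 0)) = ?c B * v B" .
  qed (rule refl)
  also have "\<dots> = Pot N v" unfolding Pot_def by (rule refl)
  finally show "(\<Sum>\<pi>\<in>partitions N. ewens N \<pi> * (\<Sum>B\<in>\<pi>. v B)) = Pot N v" .
qed

lemma ewens_ci: "conditional_independence (ewens :: ('a::finite) set \<Rightarrow> _)"
  unfolding conditional_independence_def
proof (intro allI impI)
  fix N :: "'a set" and \<pi> B
  assume p: "\<pi> \<in> partitions N" and B: "B \<in> \<pi>"
  have sub: "B \<subseteq> N" and ne: "B \<noteq> {}" using part_props[OF p B] by auto
  have r: "\<pi> - {B} \<in> partitions (N - B)" using rem_part[OF p B] .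
  have cd: "card (N - B) = card N - card B" using sub by (simp add: card_Diff_subset)
  have pos: "(fact (card N - card B) :: real) \<noteq> 0" by simp
  have "ewens N \<pi> = fact (card B - 1) * (\<Prod>C\<in>\<pi> - {B}. fact (card C - 1)) / fact (card N)"
    unfolding ewens_def using p B by (simp add: prod.remove)
  also have "\<dots> = ((\<Prod>C\<in>\<pi> - {B}. fact (card C - 1)) / fact (card (N - B)))
       * (fact (card B - 1) * fact (card N - card B) / fact (card N))"
    using pos unfolding cd by (simp add: field_simps)
  also have "\<dots> = ewens (N - B) (\<pi> - {B}) * (\<Sum>\<tau>\<in>{\<tau>\<in>partitions N. B \<in> \<tau>}. ewens N \<tau>)"
    using r block_ewens[OF sub ne] unfolding ewens_def[of "N - B"] by simp
  finally show "ewens N \<pi> = ewens (N - B) (\<pi> - {B}) * (\<Sum>\<tau>\<in>{\<tau>\<in>partitions N. B \<in> \<tau>}. ewens N \<tau>)" .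
qed

theorem proposition3:
  fixes p :: "('a::finite) set \<Rightarrow> 'a set set \<Rightarrow> real"
  shows "(random_partition p \<and> generates_potential p \<and> conditional_independence p)
           \<longleftrightarrow> p = ewens"
proof
  assume "p = ewens"
  thus "random_partition p \<and> generates_potential p \<and> conditional_independence p"
    by (simp add: ewens_rp ewens_gp ewens_ci)
next
  assume a: "random_partition p \<and> generates_potential p \<and> conditional_independence p"
  hence rp: "random_partition p" and gp: "generates_potential p" and ci: "conditional_independence p"
    by simp_all
  have ciN: "\<And>N \<pi> B. \<pi> \<in> partitions N \<Longrightarrow> B \<in> \<pi> \<Longrightarrow>
      p N \<pi> = p (N - B) (\<pi> - {B}) * (\<Sum>\<tau>\<in>{\<tau>\<in>partitions N. B \<in> \<tau>}. p N \<tau>)"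
    using ci[unfolded conditional_independence_def, rule_format] .
  have ciE: "\<And>(N::'a set) \<pi> B. \<pi> \<in> partitions N \<Longrightarrow> B \<in> \<pi> \<Longrightarrow>
      ewens N \<pi> = ewens (N - B) (\<pi> - {B}) * (\<Sum>\<tau>\<in>{\<tau>\<in>partitions N. B \<in> \<tau>}. ewens N \<tau>)"
    using ewens_ci[unfolded conditional_independence_def, rule_format] .
  have "\<forall>\<pi>. p N \<pi> = ewens N \<pi>" if "finite N" for N :: "'a set"
    using that
  proof (induction N rule: finite_psubset_induct)
    case (psubset N)
    show ?case
    proof
      fix \<pi>
      show "p N \<pi> = ewens N \<pi>"
      proof (cases "\<pi> \<in> partitions N")
        case False
        thus ?thesis using rp unfolding random_partition_def ewens_def by auto
      next
        case p: True
        show ?thesis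
        proof (cases "N = {}")
          case True
          hence "\<pi> = {}" using p partitions_empty by auto
          moreover have "(\<Sum>\<pi>\<in>partitions {}. p {} \<pi>) = 1" using rp unfolding random_partition_def by blast
          hence "p {} {} = 1" by (simp add: partitions_empty)
          ultimately show ?thesis using True by (simp add: ewens_def partitions_empty)
        next
          case False
          have "\<Union>\<pi> = N" using p partition_onD1 unfolding partitions_def by auto
          then obtain B where B: "B \<in> \<pi>" using False by blast
          have sub: "B \<subseteq> N" and ne: "B \<noteq> {}" using part_props[OF p B] by auto
          have ps: "N - B \<subset> N" using sub ne by blast
          have "p N \<pi> = p (N - B) (\<pi> - {B}) * (\<Sum>\<tau>\<in>{\<tau>\<in>partitions N. B \<in> \<tau>}. p N \<tau>)"
            by (rule ciN[OF p B])
          also have "\<dots> = ewens (N - B) (\<pi> - {B}) * (\<Sum>\<tau>\<in>{\<tau>\<in>partitions N. B \<in> \<tau>}. ewens N \<tau>)"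
            using psubset(2)[OF ps] block_gp[OF gp sub ne] block_ewens[OF sub ne] by simp
          also have "\<dots> = ewens N \<pi>"
            by (rule ciE[OF p B, symmetric])
          finally show ?thesis .
        qed
      qed
    qed
  qed
  thus "p = ewens" by (simp add: fun_eq_iff)
qed

end
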